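(* Let $X,Y\in\Sigma^*$, $k\ge0$ and $\ell\ge1$ integers, $\mathcal{S}(\ell)$ an $\ell$-cover, $\mathcal{F}$ the set of all strings occurring as a component of a pair in $\mathsf{Pairs}_\ell(X)\cup\mathsf{Pairs}_\ell(Y)$, and $(N(F))_{F\in\mathcal{F}}$ a $k$-complete family. For $S\in\{X,Y\}$ and a half-integer $0\le k'\le k$ define $$\mathsf{Pairs}^{(k,k')}_\ell(S)=\bigcup_{(U_1,U_2)\in\mathsf{Pairs}_\ell(S)}\{(U_1',U_2'): U_i'\in N_{d_i,d_i'}(U_i),\ d_1+d_2=k,\ d_1'+d_2'=k'\},$$ where $d_1,d_2$ range over nonnegative integers and $d_i'$ over half-integers with $0\le d_i'\le d_i$. If $\mathsf{LCF}_k(X,Y)\ge\ell$, then $$\mathsf{LCF}_k(X,Y)=\max_{k_1+k_2=k}\mathrm{maxPairLCP}(\mathsf{Pairs}^{(k,k_1)}_\ell(X),\mathsf{Pairs}^{(k,k_2)}_\ell(Y)),$$ where $k_1,k_2$ range over half-integers in $[0,k]$.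
   Context: $U[i..j]$ is a factor, $U^R$ the reversal, $d_H$ the Hamming distance, $\mathsf{LCP}$ the longest common prefix length, $\mathsf{LCP}_d(U,V)=\max\{p\le\min(|U|,|V|): d_H(U[1..p],V[1..p])\le d\}$, $\#_\$(W)$ the number of $\$$'s in $W$, and half-integers are elements of $\tfrac12\mathbb{Z}$. $\mathsf{LCF}_k(X,Y)$ is the maximum length of a factor of $X$ and a factor of $Y$ of equal length at Hamming distance at most $k$. A $d$-cover is a set $\mathcal{S}(d)\subseteq\mathbb{Z}_+$ with a function $h$, $0\le h(i,j)<d$, such that $i+h(i,j),j+h(i,j)\in\mathcal{S}(d)$ for all $i,j\in\mathbb{Z}_+$; $\mathsf{Pairs}_\ell(U)=\{((U[1..i-1])^R,U[i..|U|]): i\in\mathcal{S}(\ell)\cap[1..|U|]\}$. $\mathrm{maxPairLCP}(\mathcal{P},\mathcal{Q})=\max\{\mathsf{LCP}(P_1,Q_1)+\mathsf{LCP}(P_2,Q_2):(P_1,P_2)\in\mathcal{P},(Q_1,Q_2)\in\mathcal{Q}\}$. With $\$\notin\Sigma$, $\Sigma_\$=\Sigma\cup\{\$\}$: $U',V'\in\Sigma_\$^*$ form a $(U,V)_d$-pair if $|U'|=|U|$, $|V'|=|V|$, and for each $i$: if $i>\mathsf{LCP}_d(U,V)$ or $U[i]=V[i]$ then $U'[i]=U[i]$, $V'[i]=V[i]$; otherwise $U'[i]=V'[i]\in\{U[i],V[i],\$\}$. Sets $N(F)\subseteq\Sigma_\$^*$ form a $k$-complete family if for all $U,V\in\mathcal{F}$,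 $0\le d\le k$, some $(U,V)_d$-pair $(U',V')$ has $U'\in N(U)$, $V'\in N(V)$. $N_d(F)=\{F'\in N(F):|F'|=|F|,\ d_H(F,F')\le d\}$ and $N_{d,d'}(F)=\{F'\in N_d(F): d_H(F,F')-\tfrac12\#_\$(F')\le d'\}$. *)

theory Defs
  imports Complex_Main
begin

text \<open>Strings are lists; positions of the paper (1-based) correspond to list indices
  shifted by one.  The extended alphabet Sigma plus dollar is modelled by \<open>'a option\<close>,
  with \<open>None\<close> playing the role of the fresh symbol dollar and \<open>Some c\<close> the letter c.\<close>

definition hamming :: "'b list \<Rightarrow> 'b list \<Rightarrow> nat" where
  "hamming U V = card {i. i < length U \<and> i < length V \<and> U ! i \<noteq> V ! i}"

fun lcp :: "'b list \<Rightarrow> 'b list \<Rightarrow> nat" where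
  "lcp (x # xs) (y # ys) = (if x = y then Suc (lcp xs ys) else 0)"
| "lcp _ _ = 0"

definition lcp_d :: "nat \<Rightarrow> 'b list \<Rightarrow> 'b list \<Rightarrow> nat" where
  "lcp_d d U V = Max {p. p \<le> min (length U) (length V) \<and>
                          hamming (take p U) (take p V) \<le> d}"

definition LCF :: "nat \<Rightarrow> 'a list \<Rightarrow> 'a list \<Rightarrow> nat" where
  "LCF k X Y = Max {l. \<exists>i j. i + l \<le> length X \<and> j + l \<le> length Y \<and>
                        hamming (take l (drop i X)) (take l (drop j Y)) \<le> k}"

definition is_cover :: "nat \<Rightarrow> nat set \<Rightarrow> bool" where
  "is_cover d S \<longleftrightarrow> S \<subseteq> {1..} \<and>
     (\<exists>h :: nat \<Rightarrow> nat \<Rightarrow> nat. \<forall>i j. 1 \<le> i \<longrightarrow> 1 \<le> j \<longrightarrow>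
        h i j < d \<and> i + h i j \<in> S \<and> j + h i j \<in> S)"

definition Pairs :: "nat set \<Rightarrow> 'a list \<Rightarrow> ('a list \<times> 'a list) set" where
  "Pairs S U = {(rev (take (i - 1) U), drop (i - 1) U) | i. i \<in> S \<and> 1 \<le> i \<and> i \<le> length U}"

definition maxPairLCP :: "('b list \<times> 'b list) set \<Rightarrow> ('b list \<times> 'b list) set \<Rightarrow> nat" where
  "maxPairLCP P Q = Sup {lcp P1 Q1 + lcp P2 Q2 | P1 P2 Q1 Q2. (P1, P2) \<in> P \<and> (Q1, Q2) \<in> Q}"

definition is_dpair :: "nat \<Rightarrow> 'a list \<Rightarrow> 'a list \<Rightarrow> 'a option list \<Rightarrow> 'a option list \<Rightarrow> bool" where
  "is_dpair d U V U' V' \<longleftrightarrow> length U' = length U \<and> length V' = length V \<and>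
     (\<forall>i. (i < length U \<longrightarrow> (i \<ge> lcp_d d U V \<or> (i < length V \<and> U ! i = V ! i)) \<longrightarrow>
               U' ! i = Some (U ! i)) \<and>
          (i < length V \<longrightarrow> (i \<ge> lcp_d d U V \<or> (i < length U \<and> U ! i = V ! i)) \<longrightarrow>
               V' ! i = Some (V ! i)) \<and>
          ((i < lcp_d d U V \<and> U ! i \<noteq> V ! i) \<longrightarrow>
               U' ! i = V' ! i \<and> U' ! i \<in> {Some (U ! i), Some (V ! i), None}))"

definition k_complete :: "nat \<Rightarrow> 'a list set \<Rightarrow> ('a list \<Rightarrow> 'a option list set) \<Rightarrow> bool" where
  "k_complete k F N \<longleftrightarrow> (\<forall>U\<in>F. \<forall>V\<in>F. \<forall>d\<le>k. \<exists>U' V'.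
       is_dpair d U V U' V' \<and> U' \<in> N U \<and> V' \<in> N V)"

definition count_dollar :: "'a option list \<Rightarrow> nat" where
  "count_dollar W = length (filter (\<lambda>c. c = None) W)"

definition N_d :: "('a list \<Rightarrow> 'a option list set) \<Rightarrow> nat \<Rightarrow> 'a list \<Rightarrow> 'a option list set" where
  "N_d N d F = {F' \<in> N F. length F' = length F \<and> hamming (map Some F) F' \<le> d}"

definition N_dd :: "('a list \<Rightarrow> 'a option list set) \<Rightarrow> nat \<Rightarrow> real \<Rightarrow> 'a list \<Rightarrow> 'a option list set" where
  "N_dd N d d' F = {F' \<in> N_d N d F.
      real (hamming (map Some F) F') - real (count_dollar F') / 2 \<le> d'}"

definition half_int :: "real \<Rightarrow> bool" where
  "half_int x \<longleftrightarrow> (\<exists>z::int. x = real_of_int z / 2)"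

definition PairsK :: "nat set \<Rightarrow> ('a list \<Rightarrow> 'a option list set) \<Rightarrow> nat \<Rightarrow> real \<Rightarrow> 'a list
     \<Rightarrow> ('a option list \<times> 'a option list) set" where
  "PairsK S N k k' U = (\<Union>(U1, U2) \<in> Pairs S U.
     {(U1', U2') | U1' U2'. \<exists>(d1::nat) (d2::nat) (d1'::real) (d2'::real).
        d1 + d2 = k \<and> d1' + d2' = k' \<and> half_int d1' \<and> half_int d2' \<and>
        0 \<le> d1' \<and> d1' \<le> real d1 \<and> 0 \<le> d2' \<and> d2' \<le> real d2 \<and>
        U1' \<in> N_dd N d1 d1' U1 \<and> U2' \<in> N_dd N d2 d2' U2})"

definition pair_family :: "nat set \<Rightarrow> 'a list \<Rightarrow> 'a list \<Rightarrow> 'a list set" where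
  "pair_family S X Y = {F. \<exists>P \<in> Pairs S X \<union> Pairs S Y. F = fst P \<or> F = snd P}"

end

theory Submission imports Defs begin

lemma real_card_sum:
  fixes n :: nat
  shows "real (card {i. i < n \<and> P i}) = (\<Sum>i<n. if P i then 1 else 0)"
proof (induction n)
  case (Suc n)
  have e: "{i. i < Suc n \<and> P i} = (if P n then insert n {i. i < n \<and> P i} else {i. i < n \<and> P i})"
    by (auto simp: less_Suc_eq)
  show ?case using Suc by (simp add: e)
qed simp

lemma hamming_sum:
  "real (hamming xs ys) = (\<Sum>i<min (length xs) (length ys). if xs!i \<noteq> ys!i then 1 else 0)"
  unfolding hamming_def
proof -
  have "{i. i < length xs \<and> i < length ys \<and> xs ! i \<noteq> ys ! i} = {i. i < min (length xs) (length ys) \<and> xs ! i \<noteq> ys ! i}" by auto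
  thus "real (card {i. i < length xs \<and> i < length ys \<and> xs ! i \<noteq> ys ! i}) = (\<Sum>i<min (length xs) (length ys). if xs!i \<noteq> ys!i then 1 else 0)"
    using real_card_sum[of "min (length xs) (length ys)" "\<lambda>i. xs!i \<noteq> ys!i"] by metis
qed

definition cst :: "'a \<Rightarrow> 'a option \<Rightarrow> real" where
  "cst u x = (if Some u \<noteq> x then 1 else 0) - (if x = None then 1/2 else 0)"

lemma cst_nonneg: "cst u x \<ge> 0" by (auto simp: cst_def)

definition wt :: "'a list \<Rightarrow> 'a option list \<Rightarrow> real" where
  "wt U U' = real (hamming (map Some U) U') - real (count_dollar U') / 2"

lemma wt_sum: assumes "length U' = length U"
  shows "wt U U' = (\<Sum>i<length U. cst (U!i) (U'!i))"
proof -
  have h: "real (hamming (map Some U) U') = (\<Sum>i<length U. if Some (U!i) \<noteq> U'!i then 1 else 0)"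
    using hamming_sum[of "map Some U" U'] assms by simp
  have c: "real (count_dollar U') = (\<Sum>i<length U. if U'!i = None then 1 else 0)"
    unfolding count_dollar_def length_filter_conv_card using real_card_sum assms by simp
  show ?thesis unfolding wt_def h c cst_def sum_subtractf sum_divide_distrib
    by (rule arg_cong2[where f="(-)"]) (auto intro!: sum.cong)
qed

lemma wt_nonneg: "length U' = length U \<Longrightarrow> wt U U' \<ge> 0"
  by (simp add: wt_sum sum_nonneg cst_nonneg)

lemma lcp_le1: "lcp xs ys \<le> length xs"
  by (induction xs ys rule: lcp.induct) auto
lemma lcp_le2: "lcp xs ys \<le> length ys"
  by (induction xs ys rule: lcp.induct) auto
lemma lcp_nth: "i < lcp xs ys \<Longrightarrow> xs ! i = ys ! i"
  by (induction xs ys arbitrary: i rule: lcp.induct) (auto split: if_splits simp: nth_Cons' )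

lemma lcp_ge: "(\<And>i. i < p \<Longrightarrow> i < length xs \<and> i < length ys \<and> xs!i = ys!i) \<Longrightarrow> p \<le> lcp xs ys"
proof (induction xs arbitrary: ys p)
  case Nil thus ?case by (cases p) force+
next
  case (Cons x xs ys p)
  show ?case
  proof (cases p)
    case (Suc q)
    then obtain y ys' where ys: "ys = y # ys'" using Cons.prems[of 0] by (cases ys) auto
    have "x = y" using Cons.prems[of 0] Suc ys by simp
    moreover have "q \<le> lcp xs ys'"
    proof (rule Cons.IH)
      fix i assume "i < q" thus "i < length xs \<and> i < length ys' \<and> xs ! i = ys' ! i"
        using Cons.prems[of "Suc i"] Suc ys by simp
    qed
    ultimately show ?thesis using Suc ys by simp
  qed simp
qed


lemma hamming_take_sum:
  assumes "p \<le> length U" "p \<le> length V"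
  shows "real (hamming (take p U) (take p V)) = (\<Sum>i<p. if U!i \<noteq> V!i then 1 else 0)"
  using assms by (simp add: hamming_sum min_def)

lemma cst_pair: "(if u \<noteq> v then 1 else 0) \<le> cst u x + cst v x"
  by (auto simp: cst_def)

lemma upper_core:
  assumes "length U' = length U" "length V' = length V"
  shows "real (hamming (take (lcp U' V') U) (take (lcp U' V') V)) \<le> wt U U' + wt V V'"
proof -
  let ?p = "lcp U' V'"
  have pU: "?p \<le> length U" "?p \<le> length V" using lcp_le1[of U' V'] lcp_le2[of U' V'] assms by auto
  have "real (hamming (take ?p U) (take ?p V)) = (\<Sum>i<?p. if U!i \<noteq> V!i then 1 else 0)"
    using hamming_take_sum pU by blast
  also have "\<dots> \<le> (\<Sum>i<?p. cst (U!i) (U'!i) + cst (V!i) (V'!i))"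
  proof (rule sum_mono)
    fix i assume "i \<in> {..<?p}"
    hence "U'!i = V'!i" using lcp_nth by auto
    thus "(if U!i \<noteq> V!i then 1 else 0) \<le> cst (U!i) (U'!i) + cst (V!i) (V'!i)"
      using cst_pair by metis
  qed
  also have "\<dots> = (\<Sum>i<?p. cst (U!i) (U'!i)) + (\<Sum>i<?p. cst (V!i) (V'!i))"
    by (simp add: sum.distrib)
  also have "\<dots> \<le> (\<Sum>i<length U. cst (U!i) (U'!i)) + (\<Sum>i<length V. cst (V!i) (V'!i))"
    by (intro add_mono sum_mono2) (use pU in \<open>auto simp: cst_nonneg\<close>)
  also have "\<dots> = wt U U' + wt V V'" using assms by (simp add: wt_sum)
  finally show ?thesis .
qed

lemma lcp_d_props:
  "lcp_d d U V \<le> length U \<and> lcp_d d U V \<le> length V \<and>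
   hamming (take (lcp_d d U V) U) (take (lcp_d d U V) V) \<le> d"
proof -
  let ?A = "{p. p \<le> min (length U) (length V) \<and> hamming (take p U) (take p V) \<le> d}"
  have f: "finite ?A" by (rule finite_subset[of _ "{..min (length U) (length V)}"]) auto
  have "0 \<in> ?A" by (simp add: hamming_def)
  hence "Max ?A \<in> ?A" using f Max_in by blast
  thus ?thesis unfolding lcp_d_def by simp
qed

lemma lcp_d_ge:
  assumes "p \<le> length U" "p \<le> length V" "hamming (take p U) (take p V) \<le> d"
  shows "p \<le> lcp_d d U V"
proof -
  let ?A = "{p. p \<le> min (length U) (length V) \<and> hamming (take p U) (take p V) \<le> d}"
  have f: "finite ?A" by (rule finite_subset[of _ "{..min (length U) (length V)}"]) auto
  have "p \<in> ?A" using assms by simp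
  thus ?thesis unfolding lcp_d_def using f Max_ge by blast
qed

lemma dpair_lcp:
  assumes "is_dpair d U V U' V'"
  shows "lcp_d d U V \<le> lcp U' V'"
proof (rule lcp_ge)
  fix i assume i: "i < lcp_d d U V"
  have l: "i < length U" "i < length V" using i lcp_d_props[of d U V] by auto
  show "i < length U' \<and> i < length V' \<and> U' ! i = V' ! i"
    using assms l i unfolding is_dpair_def by (cases "U!i = V!i") auto
qed

lemma dpair_ham1:
  assumes "is_dpair d U V U' V'"
  shows "hamming (map Some U) U' \<le> hamming (take (lcp_d d U V) U) (take (lcp_d d U V) V)"
  unfolding hamming_def
proof (rule card_mono)
  show "finite {i. i < length (take (lcp_d d U V) U) \<and> i < length (take (lcp_d d U V) V) \<and>
          take (lcp_d d U V) U ! i \<noteq> take (lcp_d d U V) V ! i}" by simp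
  show "{i. i < length (map Some U) \<and> i < length U' \<and> map Some U ! i \<noteq> U' ! i}
    \<subseteq> {i. i < length (take (lcp_d d U V) U) \<and> i < length (take (lcp_d d U V) V) \<and>
          take (lcp_d d U V) U ! i \<noteq> take (lcp_d d U V) V ! i}"
  proof
    fix i assume "i \<in> {i. i < length (map Some U) \<and> i < length U' \<and> map Some U ! i \<noteq> U' ! i}"
    hence i: "i < length U" "Some (U!i) \<noteq> U'!i" by auto
    have q: "lcp_d d U V \<le> length U" "lcp_d d U V \<le> length V" using lcp_d_props[of d U V] by auto
    have "i < lcp_d d U V \<and> U!i \<noteq> V!i"
    proof (rule ccontr)
      assume "\<not> (i < lcp_d d U V \<and> U!i \<noteq> V!i)"
      hence "i \<ge> lcp_d d U V \<or> (i < length V \<and> U!i = V!i)" using q by auto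
      hence "U'!i = Some (U!i)" using assms i(1) unfolding is_dpair_def by blast
      thus False using i(2) by simp
    qed
    thus "i \<in> {i. i < length (take (lcp_d d U V) U) \<and> i < length (take (lcp_d d U V) V) \<and>
          take (lcp_d d U V) U ! i \<noteq> take (lcp_d d U V) V ! i}" using q by auto
  qed
qed

lemma dpair_ham2:
  assumes "is_dpair d U V U' V'"
  shows "hamming (map Some V) V' \<le> hamming (take (lcp_d d U V) U) (take (lcp_d d U V) V)"
  unfolding hamming_def
proof (rule card_mono)
  show "finite {i. i < length (take (lcp_d d U V) U) \<and> i < length (take (lcp_d d U V) V) \<and>
          take (lcp_d d U V) U ! i \<noteq> take (lcp_d d U V) V ! i}" by simp
  show "{i. i < length (map Some V) \<and> i < length V' \<and> map Some V ! i \<noteq> V' ! i}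
    \<subseteq> {i. i < length (take (lcp_d d U V) U) \<and> i < length (take (lcp_d d U V) V) \<and>
          take (lcp_d d U V) U ! i \<noteq> take (lcp_d d U V) V ! i}"
  proof
    fix i assume "i \<in> {i. i < length (map Some V) \<and> i < length V' \<and> map Some V ! i \<noteq> V' ! i}"
    hence i: "i < length V" "Some (V!i) \<noteq> V'!i" by auto
    have q: "lcp_d d U V \<le> length U" "lcp_d d U V \<le> length V" using lcp_d_props[of d U V] by auto
    have "i < lcp_d d U V \<and> U!i \<noteq> V!i"
    proof (rule ccontr)
      assume "\<not> (i < lcp_d d U V \<and> U!i \<noteq> V!i)"
      hence "i \<ge> lcp_d d U V \<or> (i < length U \<and> U!i = V!i)" using q by auto
      hence "V'!i = Some (V!i)" using assms i(1) unfolding is_dpair_def by blast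
      thus False using i(2) by simp
    qed
    thus "i \<in> {i. i < length (take (lcp_d d U V) U) \<and> i < length (take (lcp_d d U V) V) \<and>
          take (lcp_d d U V) U ! i \<noteq> take (lcp_d d U V) V ! i}" using q by auto
  qed
qed

lemma dpair_wt:
  assumes "is_dpair d U V U' V'"
  shows "wt U U' + wt V V' \<le> real d"
proof -
  let ?q = "lcp_d d U V"
  have q: "?q \<le> length U" "?q \<le> length V" "hamming (take ?q U) (take ?q V) \<le> d"
    using lcp_d_props[of d U V] by auto
  have lU: "length U' = length U" and lV: "length V' = length V" using assms by (auto simp: is_dpair_def)
  have zU: "\<forall>i\<in>{..<length U} - {..<?q}. cst (U!i) (U'!i) = 0"
  proof
    fix i assume "i \<in> {..<length U} - {..<?q}"
    hence "i < length U" "i \<ge> ?q" by auto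
    hence "U'!i = Some (U!i)" using assms unfolding is_dpair_def by blast
    thus "cst (U!i) (U'!i) = 0" by (simp add: cst_def)
  qed
  have zV: "\<forall>i\<in>{..<length V} - {..<?q}. cst (V!i) (V'!i) = 0"
  proof
    fix i assume "i \<in> {..<length V} - {..<?q}"
    hence "i < length V" "i \<ge> ?q" by auto
    hence "V'!i = Some (V!i)" using assms unfolding is_dpair_def by blast
    thus "cst (V!i) (V'!i) = 0" by (simp add: cst_def)
  qed
  have "wt U U' + wt V V' = (\<Sum>i<length U. cst (U!i) (U'!i)) + (\<Sum>i<length V. cst (V!i) (V'!i))"
    using lU lV by (simp add: wt_sum)
  also have "\<dots> = (\<Sum>i<?q. cst (U!i) (U'!i)) + (\<Sum>i<?q. cst (V!i) (V'!i))"
    using sum.mono_neutral_right[OF _ _ zU] sum.mono_neutral_right[OF _ _ zV] q by auto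
  also have "\<dots> = (\<Sum>i<?q. cst (U!i) (U'!i) + cst (V!i) (V'!i))" by (simp add: sum.distrib)
  also have "\<dots> \<le> (\<Sum>i<?q. if U!i \<noteq> V!i then 1 else 0)"
  proof (rule sum_mono)
    fix i assume "i \<in> {..<?q}"
    hence i: "i < ?q" "i < length U" "i < length V" using q by auto
    show "cst (U!i) (U'!i) + cst (V!i) (V'!i) \<le> (if U!i \<noteq> V!i then 1 else 0)"
    proof (cases "U!i = V!i")
      case True
      hence "U'!i = Some (U!i)" "V'!i = Some (V!i)" using assms i unfolding is_dpair_def by blast+
      thus ?thesis by (simp add: cst_def)
    next
      case False
      hence "U'!i = V'!i \<and> U'!i \<in> {Some (U!i), Some (V!i), None}" using assms i unfolding is_dpair_def by blast
      thus ?thesis using False by (auto simp: cst_def)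
    qed
  qed
  also have "\<dots> = real (hamming (take ?q U) (take ?q V))" using hamming_take_sum q by metis
  also have "\<dots> \<le> real d" using q by simp
  finally show ?thesis .
qed


lemma hamming_Nil1[simp]: "hamming [] ys = 0" by (simp add: hamming_def)
lemma hamming_Nil2[simp]: "hamming xs [] = 0" by (simp add: hamming_def)

lemma hamming_Cons[simp]: "hamming (x#xs) (y#ys) = (if x \<noteq> y then 1 else 0) + hamming xs ys"
proof -
  have "real (hamming (x#xs) (y#ys)) = (\<Sum>i<Suc (min (length xs) (length ys)). if (x#xs)!i \<noteq> (y#ys)!i then 1 else 0)"
    by (simp add: hamming_sum)
  also have "\<dots> = (if x \<noteq> y then 1 else 0) + real (hamming xs ys)"
    by (subst sum.lessThan_Suc_shift) (simp add: hamming_sum del: sum.lessThan_Suc)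
  finally have "real (hamming (x#xs) (y#ys)) = real ((if x \<noteq> y then 1 else 0) + hamming xs ys)" by simp
  thus ?thesis by (simp only: of_nat_eq_iff)
qed

lemma hamming_append: "length xs = length ys \<Longrightarrow> hamming (xs @ xs') (ys @ ys') = hamming xs ys + hamming xs' ys'"
  by (induction xs ys rule: list_induct2) auto

lemma hamming_rev: "length xs = length ys \<Longrightarrow> hamming (rev xs) (rev ys) = hamming xs ys"
  by (induction xs ys rule: list_induct2) (auto simp: hamming_append)

lemma take_rev_take: "p1 \<le> m \<Longrightarrow> m \<le> length X \<Longrightarrow> take p1 (rev (take m X)) = rev (take p1 (drop (m - p1) X))"
  by (simp add: take_rev drop_take min_def)

lemma decomp:
  assumes "p1 \<le> m" "m \<le> length X" "p1 \<le> m'" "m' \<le> length Y"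
  shows "hamming (take (p1+p2) (drop (m-p1) X)) (take (p1+p2) (drop (m'-p1) Y)) =
    hamming (take p1 (rev (take m X))) (take p1 (rev (take m' Y))) + hamming (take p2 (drop m X)) (take p2 (drop m' Y))"
proof -
  have x: "take (p1+p2) (drop (m-p1) X) = take p1 (drop (m-p1) X) @ take p2 (drop m X)"
    using assms by (simp add: take_add)
  have y: "take (p1+p2) (drop (m'-p1) Y) = take p1 (drop (m'-p1) Y) @ take p2 (drop m' Y)"
    using assms by (simp add: take_add)
  have l: "length (take p1 (drop (m-p1) X)) = length (take p1 (drop (m'-p1) Y))" using assms by simp
  show ?thesis unfolding x y hamming_append[OF l] using assms l
    by (simp add: take_rev_take hamming_rev)
qed


lemma LCF_fin: "finite {l. \<exists>i j. i + l \<le> length X \<and> j + l \<le> length Y \<and>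
                        hamming (take l (drop i X)) (take l (drop j Y)) \<le> k}"
  by (rule finite_subset[of _ "{..length X}"]) auto

lemma LCF_ge: "i + l \<le> length X \<Longrightarrow> j + l \<le> length Y \<Longrightarrow>
   hamming (take l (drop i X)) (take l (drop j Y)) \<le> k \<Longrightarrow> l \<le> LCF k X Y"
  unfolding LCF_def by (rule Max_ge[OF LCF_fin]) blast

lemma LCF_in: "\<exists>i j. i + LCF k X Y \<le> length X \<and> j + LCF k X Y \<le> length Y \<and>
   hamming (take (LCF k X Y) (drop i X)) (take (LCF k X Y) (drop j Y)) \<le> k"
proof -
  let ?A = "{l. \<exists>i j. i + l \<le> length X \<and> j + l \<le> length Y \<and>
                        hamming (take l (drop i X)) (take l (drop j Y)) \<le> k}"
  have "0 \<in> ?A" by auto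
  hence "Max ?A \<in> ?A" using LCF_fin Max_in by blast
  thus ?thesis unfolding LCF_def by blast
qed

lemma PairsK_elim:
  assumes "(P1, P2) \<in> PairsK S N k k1 X"
  obtains a d1 d2 d1' d2' where "1 \<le> a" "a \<le> length X" "a \<in> S"
    "d1 + d2 = k" "d1' + d2' = k1"
    "P1 \<in> N_dd N d1 d1' (rev (take (a-1) X))" "P2 \<in> N_dd N d2 d2' (drop (a-1) X)"
  using assms unfolding PairsK_def Pairs_def by blast

lemma N_dd_props: "P \<in> N_dd N d d' U \<Longrightarrow> length P = length U \<and> wt U P \<le> d'"
  unfolding N_dd_def N_d_def wt_def by auto

lemma upper:
  assumes "k1 + k2 = real k" "(P1, P2) \<in> PairsK S N k k1 X" "(Q1, Q2) \<in> PairsK S N k k2 Y"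
  shows "lcp P1 Q1 + lcp P2 Q2 \<le> LCF k X Y"
proof -
  obtain a d1 d2 d1' d2' where A: "1 \<le> a" "a \<le> length X" "a \<in> S"
    "d1 + d2 = k" "d1' + d2' = k1"
    "P1 \<in> N_dd N d1 d1' (rev (take (a-1) X))" "P2 \<in> N_dd N d2 d2' (drop (a-1) X)"
    using PairsK_elim[OF assms(2)] by blast
  obtain b e1 e2 e1' e2' where B: "1 \<le> b" "b \<le> length Y" "b \<in> S"
    "e1 + e2 = k" "e1' + e2' = k2"
    "Q1 \<in> N_dd N e1 e1' (rev (take (b-1) Y))" "Q2 \<in> N_dd N e2 e2' (drop (b-1) Y)"
    using PairsK_elim[OF assms(3)] by blast
  define m where "m = a - 1"
  define m' where "m' = b - 1"
  define U1 where "U1 = rev (take m X)"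
  define U2 where "U2 = drop m X"
  define V1 where "V1 = rev (take m' Y)"
  define V2 where "V2 = drop m' Y"
  have P1: "length P1 = length U1" "wt U1 P1 \<le> d1'" using N_dd_props[OF A(6)] unfolding U1_def m_def by auto
  have P2: "length P2 = length U2" "wt U2 P2 \<le> d2'" using N_dd_props[OF A(7)] unfolding U2_def m_def by auto
  have Q1: "length Q1 = length V1" "wt V1 Q1 \<le> e1'" using N_dd_props[OF B(6)] unfolding V1_def m'_def by auto
  have Q2: "length Q2 = length V2" "wt V2 Q2 \<le> e2'" using N_dd_props[OF B(7)] unfolding V2_def m'_def by auto
  define p1 where "p1 = lcp P1 Q1"
  define p2 where "p2 = lcp P2 Q2"
  have mX: "m \<le> length X" "m' \<le> length Y" using A B unfolding m_def m'_def by auto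
  have p1: "p1 \<le> m" "p1 \<le> m'" using lcp_le1[of P1 Q1] lcp_le2[of P1 Q1] P1 Q1 mX
    unfolding p1_def U1_def V1_def by auto
  have p2: "m + p2 \<le> length X" "m' + p2 \<le> length Y" using lcp_le1[of P2 Q2] lcp_le2[of P2 Q2] P2 Q2 mX
    unfolding p2_def U2_def V2_def by auto
  have c1: "real (hamming (take p1 U1) (take p1 V1)) \<le> wt U1 P1 + wt V1 Q1"
    unfolding p1_def by (rule upper_core) (use P1 Q1 in auto)
  have c2: "real (hamming (take p2 U2) (take p2 V2)) \<le> wt U2 P2 + wt V2 Q2"
    unfolding p2_def by (rule upper_core) (use P2 Q2 in auto)
  have "real (hamming (take (p1+p2) (drop (m-p1) X)) (take (p1+p2) (drop (m'-p1) Y)))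
      = real (hamming (take p1 U1) (take p1 V1)) + real (hamming (take p2 U2) (take p2 V2))"
    unfolding U1_def U2_def V1_def V2_def using decomp[OF p1(1) mX(1) p1(2) mX(2)] by simp
  also have "\<dots> \<le> real k" using c1 c2 P1 P2 Q1 Q2 A(5) B(5) assms(1) by linarith
  finally have h: "hamming (take (p1+p2) (drop (m-p1) X)) (take (p1+p2) (drop (m'-p1) Y)) \<le> k" by simp
  have "p1 + p2 \<le> LCF k X Y" by (rule LCF_ge[OF _ _ h]) (use p1 p2 in auto)
  thus ?thesis unfolding p1_def p2_def .
qed

lemma half_int_real: "half_int (real n)"
  unfolding half_int_def by (rule exI[of _ "2 * int n"]) simp
lemma half_int_add: "half_int x \<Longrightarrow> half_int y \<Longrightarrow> half_int (x + y)"
proof -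
  assume "half_int x" "half_int y"
  then obtain z w where "x = real_of_int z / 2" "y = real_of_int w / 2" unfolding half_int_def by blast
  thus ?thesis unfolding half_int_def by (intro exI[of _ "z + w"]) (simp add: add_divide_distrib)
qed
lemma half_int_diff: "half_int x \<Longrightarrow> half_int y \<Longrightarrow> half_int (x - y)"
proof -
  assume "half_int x" "half_int y"
  then obtain z w where "x = real_of_int z / 2" "y = real_of_int w / 2" unfolding half_int_def by blast
  thus ?thesis unfolding half_int_def by (intro exI[of _ "z - w"]) (simp add: diff_divide_distrib)
qed
lemma half_int_wt: "half_int (wt U U')"
  unfolding half_int_def wt_def
  by (rule exI[of _ "2 * int (hamming (map Some U) U') - int (count_dollar U')"]) (simp add: field_simps)


lemma in_Pairs: "1 \<le> a \<Longrightarrow> a \<le> length X \<Longrightarrow> a \<in> S \<Longrightarrow>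
   (rev (take (a-1) X), drop (a-1) X) \<in> Pairs S X"
  unfolding Pairs_def by blast

lemma lower:
  fixes X Y :: "'a list" and k l :: nat and S :: "nat set"
    and N :: "'a list \<Rightarrow> 'a option list set"
  assumes "l \<ge> 1"
    and "is_cover l S"
    and "k_complete k (pair_family S X Y) N"
    and "LCF k X Y \<ge> l"
  shows "\<exists>k1 k2 P1 P2 Q1 Q2. half_int k1 \<and> half_int k2 \<and> 0 \<le> k1 \<and> 0 \<le> k2 \<and> k1 + k2 = real k \<and>
     (P1, P2) \<in> PairsK S N k k1 X \<and> (Q1, Q2) \<in> PairsK S N k k2 Y \<and>
     LCF k X Y \<le> lcp P1 Q1 + lcp P2 Q2"
proof -
  define L where "L = LCF k X Y"
  obtain i j where ij: "i + L \<le> length X" "j + L \<le> length Y"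
     "hamming (take L (drop i X)) (take L (drop j Y)) \<le> k"
    using LCF_in[of k X Y] unfolding L_def by blast
  obtain h :: "nat \<Rightarrow> nat \<Rightarrow> nat" where h: "\<And>i j. 1 \<le> i \<Longrightarrow> 1 \<le> j \<Longrightarrow>
        h i j < l \<and> i + h i j \<in> S \<and> j + h i j \<in> S"
    using assms(2) unfolding is_cover_def by blast
  define g where "g = h (i+1) (j+1)"
  have g: "g < l" "i + 1 + g \<in> S" "j + 1 + g \<in> S" using h[of "i+1" "j+1"] unfolding g_def by auto
  have gL: "g < L" using g assms(4) unfolding L_def by simp
  define m where "m = i + g"
  define m' where "m' = j + g"
  define U1 where "U1 = rev (take m X)"
  define U2 where "U2 = drop m X"
  define V1 where "V1 = rev (take m' Y)"
  define V2 where "V2 = drop m' Y"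
  have mX: "m < length X" "m' < length Y" using ij gL unfolding m_def m'_def by auto
  have PX: "(U1, U2) \<in> Pairs S X"
    using in_Pairs[of "i+1+g" X S] g mX unfolding U1_def U2_def m_def by auto
  have PY: "(V1, V2) \<in> Pairs S Y"
    using in_Pairs[of "j+1+g" Y S] g mX unfolding V1_def V2_def m'_def by auto
  have F: "U1 \<in> pair_family S X Y" "U2 \<in> pair_family S X Y" "V1 \<in> pair_family S X Y" "V2 \<in> pair_family S X Y"
    unfolding pair_family_def using PX PY by force+
  define e1 where "e1 = hamming (take g U1) (take g V1)"
  define e2 where "e2 = hamming (take (L-g) U2) (take (L-g) V2)"
  have "hamming (take (g + (L-g)) (drop (m-g) X)) (take (g + (L-g)) (drop (m'-g) Y)) = e1 + e2"
    unfolding e1_def e2_def U1_def U2_def V1_def V2_def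
    by (rule decomp) (use mX in \<open>auto simp: m_def m'_def\<close>)
  hence e12: "e1 + e2 \<le> k" using ij gL unfolding m_def m'_def by simp
  define d1 where "d1 = e1"
  define d2 where "d2 = k - e1"
  have d12: "d1 + d2 = k" "d1 \<le> k" "d2 \<le> k" using e12 unfolding d1_def d2_def by auto
  have lcpd1: "g \<le> lcp_d d1 U1 V1"
    by (rule lcp_d_ge) (use mX in \<open>auto simp: U1_def V1_def m_def m'_def d1_def e1_def\<close>)
  have lcpd2: "L - g \<le> lcp_d d2 U2 V2"
    by (rule lcp_d_ge) (use ij e12 in \<open>auto simp: U2_def V2_def m_def m'_def d2_def e2_def\<close>)
  obtain U1' V1' where D1: "is_dpair d1 U1 V1 U1' V1'" "U1' \<in> N U1" "V1' \<in> N V1"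
    using assms(3) F d12 unfolding k_complete_def by blast
  obtain U2' V2' where D2: "is_dpair d2 U2 V2 U2' V2'" "U2' \<in> N U2" "V2' \<in> N V2"
    using assms(3) F d12 unfolding k_complete_def by blast
  have len: "length U1' = length U1" "length V1' = length V1" "length U2' = length U2" "length V2' = length V2"
    using D1 D2 unfolding is_dpair_def by auto
  have hU1: "hamming (map Some U1) U1' \<le> d1" "hamming (map Some V1) V1' \<le> d1"
    using dpair_ham1[OF D1(1)] dpair_ham2[OF D1(1)] lcp_d_props[of d1 U1 V1] by auto
  have hU2: "hamming (map Some U2) U2' \<le> d2" "hamming (map Some V2) V2' \<le> d2"
    using dpair_ham1[OF D2(1)] dpair_ham2[OF D2(1)] lcp_d_props[of d2 U2 V2] by auto
  have Nd: "U1' \<in> N_d N d1 U1" "V1' \<in> N_d N d1 V1" "U2' \<in> N_d N d2 U2" "V2' \<in> N_d N d2 V2"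
    unfolding N_d_def using D1 D2 len hU1 hU2 by auto
  define w1 where "w1 = wt U1 U1'"
  define v1 where "v1 = wt V1 V1'"
  define w2 where "w2 = wt U2 U2'"
  define v2 where "v2 = wt V2 V2'"
  have W: "w1 \<ge> 0" "v1 \<ge> 0" "w2 \<ge> 0" "v2 \<ge> 0" "w1 + v1 \<le> real d1" "w2 + v2 \<le> real d2"
    using wt_nonneg len dpair_wt[OF D1(1)] dpair_wt[OF D2(1)] unfolding w1_def v1_def w2_def v2_def by auto
  have dk: "real d1 + real d2 = real k" using d12 by (metis of_nat_add)
  define k1 where "k1 = w1 + w2"
  define k2 where "k2 = real k - k1"
  have XP: "(U1', U2') \<in> PairsK S N k k1 X"
    unfolding PairsK_def
  proof (rule UN_I[OF PX], simp, intro exI conjI)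
    show "d1 + d2 = k" by fact
    show "w1 + w2 = k1" unfolding k1_def ..
    show "half_int w1" "half_int w2" unfolding w1_def w2_def by (rule half_int_wt)+
    show "0 \<le> w1" "w1 \<le> real d1" "0 \<le> w2" "w2 \<le> real d2" using W by auto
    show "U1' \<in> N_dd N d1 w1 U1" "U2' \<in> N_dd N d2 w2 U2"
      unfolding N_dd_def using Nd by (auto simp: w1_def w2_def wt_def)
  qed
  have YP: "(V1', V2') \<in> PairsK S N k k2 Y"
    unfolding PairsK_def
  proof (rule UN_I[OF PY], simp, intro exI conjI)
    show "d1 + d2 = k" by fact
    show "(real d1 - w1) + (real d2 - w2) = k2" unfolding k2_def k1_def using dk by simp
    show "half_int (real d1 - w1)" "half_int (real d2 - w2)"
      unfolding w1_def w2_def by (intro half_int_diff half_int_real half_int_wt)+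
    show "0 \<le> real d1 - w1" "real d1 - w1 \<le> real d1" "0 \<le> real d2 - w2" "real d2 - w2 \<le> real d2"
      using W by auto
    show "V1' \<in> N_dd N d1 (real d1 - w1) V1" "V2' \<in> N_dd N d2 (real d2 - w2) V2"
      unfolding N_dd_def using Nd W by (auto simp: v1_def v2_def wt_def)
  qed
  have "L \<le> lcp U1' V1' + lcp U2' V2'"
    using dpair_lcp[OF D1(1)] dpair_lcp[OF D2(1)] lcpd1 lcpd2 gL by linarith
  moreover have "half_int k1" "half_int k2" unfolding k1_def k2_def w1_def w2_def
    by (intro half_int_add half_int_diff half_int_real half_int_wt)+
  moreover have "0 \<le> k1" "0 \<le> k2" "k1 + k2 = real k" using W dk unfolding k1_def k2_def by auto
  ultimately show ?thesis using XP YP unfolding L_def by blast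
qed

theorem corollary11:
  fixes X Y :: "'a list" and k l :: nat and S :: "nat set"
    and N :: "'a list \<Rightarrow> 'a option list set"
  assumes "l \<ge> 1"
    and "is_cover l S"
    and "k_complete k (pair_family S X Y) N"
    and "LCF k X Y \<ge> l"
  shows "LCF k X Y = Sup {maxPairLCP (PairsK S N k k1 X) (PairsK S N k k2 Y) | k1 k2.
            half_int k1 \<and> half_int k2 \<and> 0 \<le> k1 \<and> 0 \<le> k2 \<and> k1 + k2 = real k}"
proof -
  let ?L = "LCF k X Y"
  let ?M = "{maxPairLCP (PairsK S N k k1 X) (PairsK S N k k2 Y) | k1 k2.
            half_int k1 \<and> half_int k2 \<and> 0 \<le> k1 \<and> 0 \<le> k2 \<and> k1 + k2 = real k}"
  have T: "\<And>k1 k2. k1 + k2 = real k \<Longrightarrow> (\<forall>x \<in> {lcp P1 Q1 + lcp P2 Q2 | P1 P2 Q1 Q2.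
       (P1, P2) \<in> PairsK S N k k1 X \<and> (Q1, Q2) \<in> PairsK S N k k2 Y}. x \<le> ?L)"
    using upper by blast
  have Tle: "maxPairLCP (PairsK S N k k1 X) (PairsK S N k k2 Y) \<le> ?L" if "k1 + k2 = real k" for k1 k2
  proof -
    let ?T = "{lcp P1 Q1 + lcp P2 Q2 | P1 P2 Q1 Q2.
       (P1, P2) \<in> PairsK S N k k1 X \<and> (Q1, Q2) \<in> PairsK S N k k2 Y}"
    show ?thesis
    proof (cases "?T = {}")
      case True thus ?thesis unfolding maxPairLCP_def by (metis Sup_nat_empty le0)
    next
      case False thus ?thesis unfolding maxPairLCP_def using T[OF that] by (intro cSup_least) auto
    qed
  qed
  have Mle: "\<forall>x\<in>?M. x \<le> ?L" using Tle by blast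
  obtain k1 k2 P1 P2 Q1 Q2 where K: "half_int k1" "half_int k2" "0 \<le> k1" "0 \<le> k2" "k1 + k2 = real k"
     "(P1, P2) \<in> PairsK S N k k1 X" "(Q1, Q2) \<in> PairsK S N k k2 Y"
     "?L \<le> lcp P1 Q1 + lcp P2 Q2"
    using lower[OF assms] by blast
  have "?L \<le> maxPairLCP (PairsK S N k k1 X) (PairsK S N k k2 Y)"
    unfolding maxPairLCP_def
  proof (rule order_trans[OF K(8)], rule cSup_upper)
    show "lcp P1 Q1 + lcp P2 Q2 \<in> {lcp P1 Q1 + lcp P2 Q2 | P1 P2 Q1 Q2.
       (P1, P2) \<in> PairsK S N k k1 X \<and> (Q1, Q2) \<in> PairsK S N k k2 Y}" using K by blast
    show "bdd_above {lcp P1 Q1 + lcp P2 Q2 | P1 P2 Q1 Q2.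
       (P1, P2) \<in> PairsK S N k k1 X \<and> (Q1, Q2) \<in> PairsK S N k k2 Y}"
      using T[OF K(5)] by (intro bdd_aboveI) blast
  qed
  also have "\<dots> \<le> Sup ?M"
    by (rule cSup_upper) (use K Mle in \<open>auto intro!: bdd_aboveI\<close>)
  finally have ge: "?L \<le> Sup ?M" .
  have "Sup ?M \<le> ?L" by (rule cSup_least) (use K Mle in auto)
  thus ?thesis using ge by simp
qed

end
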